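(* Let $X$ be a Banach space, $T$ an arbitrary nonempty index set, and $f_t:X\to\mathbb{R}\cup\{+\infty\}$ $(t\in T)$ convex functions. Then the (upper) infinite sum function $\overline{\sum_{t\in T}} f_t : X\to[-\infty,+\infty]$ is convex.
   Context: Let $\mathcal{F}(T)$ denote the family of all finite subsets of $T$, directed by inclusion. For a net $\{\alpha_S\}_{S\in\mathcal{F}(T)}\subset[-\infty,+\infty]$, $\limsup_{S\uparrow T,|S|<\infty}\alpha_S:=\inf_{S_0\in\mathcal{F}(T)}\sup_{S\in\mathcal{F}(T),\,S_0\subset S}\alpha_S$. The infinite (upper) sum is defined by $\big(\overline{\sum_{t\in T}} f_t\big)(x):=\limsup_{S\uparrow T,|S|<\infty}\sum_{t\in S} f_t(x)$ for $x\in X$. A function with values in $[-\infty,+\infty]$ is convex if its epigraph $\{(x,\mu)\in X\times\mathbb{R}: f(x)\le\mu\}$ is convex. *)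

theory Defs
  imports "HOL-Analysis.Analysis" "HOL-Library.Extended_Real"
begin

definition ereal_convex :: "('a::real_vector \<Rightarrow> ereal) \<Rightarrow> bool" where
  "ereal_convex f \<longleftrightarrow> convex {(x, \<mu>::real). f x \<le> ereal \<mu>}"

text \<open>Upper infinite sum: limsup over the net of finite subsets of T directed by inclusion.\<close>
definition upper_infsum :: "('b \<Rightarrow> 'a \<Rightarrow> ereal) \<Rightarrow> 'b set \<Rightarrow> 'a \<Rightarrow> ereal" where
  "upper_infsum f T x =
     (INF S0\<in>{S. finite S \<and> S \<subseteq> T}.
        SUP S\<in>{S. finite S \<and> S0 \<subseteq> S \<and> S \<subseteq> T}. \<Sum>t\<in>S. f t x)"

end

theory Submission
  imports Defs
begin

lemma ereal_convex_iff:
  fixes g :: "'a::real_vector \<Rightarrow> ereal"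
  shows "ereal_convex g \<longleftrightarrow> (\<forall>x y a b u. g x \<le> ereal a \<longrightarrow> g y \<le> ereal b \<longrightarrow> 0 \<le> u \<longrightarrow> u \<le> 1
      \<longrightarrow> g (u *\<^sub>R x + (1-u) *\<^sub>R y) \<le> ereal (u*a + (1-u)*b))"
proof
  assume c: "ereal_convex g"
  show "\<forall>x y a b u. g x \<le> ereal a \<longrightarrow> g y \<le> ereal b \<longrightarrow> 0 \<le> u \<longrightarrow> u \<le> 1
      \<longrightarrow> g (u *\<^sub>R x + (1-u) *\<^sub>R y) \<le> ereal (u*a + (1-u)*b)"
  proof (intro allI impI)
    fix x y :: 'a and a b u :: real
    assume "g x \<le> ereal a" "g y \<le> ereal b" "0 \<le> u" "u \<le> 1"
    then have "u *\<^sub>R (x,a) + (1-u) *\<^sub>R (y,b) \<in> {(x, \<mu>::real). g x \<le> ereal \<mu>}"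
      using c unfolding ereal_convex_def
      by (intro convexD) auto
    then show "g (u *\<^sub>R x + (1-u) *\<^sub>R y) \<le> ereal (u*a + (1-u)*b)" by simp
  qed
next
  assume h: "\<forall>x y a b u. g x \<le> ereal a \<longrightarrow> g y \<le> ereal b \<longrightarrow> 0 \<le> u \<longrightarrow> u \<le> 1
      \<longrightarrow> g (u *\<^sub>R x + (1-u) *\<^sub>R y) \<le> ereal (u*a + (1-u)*b)"
  show "ereal_convex g"
    unfolding ereal_convex_def convex_def
  proof (intro ballI allI impI)
    fix p q :: "'a \<times> real" and u w :: real
    assume p: "p \<in> {(x, \<mu>::real). g x \<le> ereal \<mu>}" and q: "q \<in> {(x, \<mu>::real). g x \<le> ereal \<mu>}"
      and u: "0 \<le> u" "0 \<le> w" "u + w = 1"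
    obtain x a where pa: "p = (x,a)" by fastforce
    obtain y b where qb: "q = (y,b)" by fastforce
    have w: "w = 1 - u" using u by simp
    have "g x \<le> ereal a" "g y \<le> ereal b" using p q pa qb by auto
    then have "g (u *\<^sub>R x + w *\<^sub>R y) \<le> ereal (u*a + w*b)"
      using h[rule_format, of x a y b u] u w by simp
    then show "u *\<^sub>R p + w *\<^sub>R q \<in> {(x, \<mu>::real). g x \<le> ereal \<mu>}"
      using pa qb by simp
  qed
qed

lemma sum_convex_step:
  fixes f :: "'b \<Rightarrow> 'a::real_vector \<Rightarrow> ereal"
  assumes fin: "finite S"
    and ninf: "\<And>t x. t \<in> S \<Longrightarrow> f t x \<noteq> -\<infinity>"
    and cv: "\<And>t. t \<in> S \<Longrightarrow> ereal_convex (f t)"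
    and hx: "(\<Sum>t\<in>S. f t x) \<le> ereal a" and hy: "(\<Sum>t\<in>S. f t y) \<le> ereal b"
    and u: "0 \<le> u" "u \<le> 1"
  shows "(\<Sum>t\<in>S. f t (u *\<^sub>R x + (1-u) *\<^sub>R y)) \<le> ereal (u*a + (1-u)*b)"
proof -
  have fx: "f t x \<noteq> \<infinity>" if "t \<in> S" for t
    proof
    assume "f t x = \<infinity>"
    then have "(\<Sum>t\<in>S. f t x) = \<infinity>" using sum_Pinfty[of "\<lambda>t. f t x" S] fin that by blast
    then show False using hx by simp
  qed
  have fy: "f t y \<noteq> \<infinity>" if "t \<in> S" for t
    proof
    assume "f t y = \<infinity>"
    then have "(\<Sum>t\<in>S. f t y) = \<infinity>" using sum_Pinfty[of "\<lambda>t. f t y" S] fin that by blast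
    then show False using hy by simp
  qed
  define rx where "rx t = real_of_ereal (f t x)" for t
  define ry where "ry t = real_of_ereal (f t y)" for t
  have ex: "f t x = ereal (rx t)" if "t \<in> S" for t
    using fx[OF that] ninf[OF that] unfolding rx_def by (cases "f t x") auto
  have ey: "f t y = ereal (ry t)" if "t \<in> S" for t
    using fy[OF that] ninf[OF that] unfolding ry_def by (cases "f t y") auto
  have "(\<Sum>t\<in>S. f t (u *\<^sub>R x + (1-u) *\<^sub>R y)) \<le> (\<Sum>t\<in>S. ereal (u * rx t + (1-u) * ry t))"
  proof (rule sum_mono)
    fix t assume t: "t \<in> S"
    show "f t (u *\<^sub>R x + (1-u) *\<^sub>R y) \<le> ereal (u * rx t + (1-u) * ry t)"
    proof -
      have "f t x \<le> ereal (rx t)" "f t y \<le> ereal (ry t)" using ex[OF t] ey[OF t] by simp_all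
      then show ?thesis using cv[OF t, unfolded ereal_convex_iff, rule_format, of x "rx t" y "ry t" u] u by simp
    qed
  qed
  also have "\<dots> = ereal (u * (\<Sum>t\<in>S. rx t) + (1-u) * (\<Sum>t\<in>S. ry t))"
    by (simp add: sum.distrib sum_distrib_left)
  also have "\<dots> \<le> ereal (u*a + (1-u)*b)"
  proof -
    have "(\<Sum>t\<in>S. f t x) = (\<Sum>t\<in>S. ereal (rx t))" by (rule sum.cong[OF refl ex])
    then have "(\<Sum>t\<in>S. f t x) = ereal (\<Sum>t\<in>S. rx t)" by simp
    then have 1: "(\<Sum>t\<in>S. rx t) \<le> a" using hx by simp
    have "(\<Sum>t\<in>S. f t y) = (\<Sum>t\<in>S. ereal (ry t))" by (rule sum.cong[OF refl ey])
    then have "(\<Sum>t\<in>S. f t y) = ereal (\<Sum>t\<in>S. ry t)" by simp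
    then have 2: "(\<Sum>t\<in>S. ry t) \<le> b" using hy by simp
    have "u * (\<Sum>t\<in>S. rx t) \<le> u * a" using 1 u by (simp add: mult_left_mono)
    moreover have "(1-u) * (\<Sum>t\<in>S. ry t) \<le> (1-u) * b" using 2 u by (simp add: mult_left_mono)
    ultimately show ?thesis by simp
  qed
  finally show ?thesis .
qed

lemma INF_lessE: "(INF i\<in>A. g i) < (c::'c::complete_linorder) \<Longrightarrow> (\<And>i. i\<in>A \<Longrightarrow> g i < c \<Longrightarrow> P) \<Longrightarrow> P"
  by (auto simp: INF_less_iff)

theorem proposition2p1:
  fixes f :: "'b \<Rightarrow> 'a::banach \<Rightarrow> ereal" and T :: "'b set"
  assumes "T \<noteq> {}"
    and "\<And>t x. t \<in> T \<Longrightarrow> f t x \<noteq> -\<infinity>"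
    and "\<And>t. t \<in> T \<Longrightarrow> ereal_convex (f t)"
  shows "ereal_convex (upper_infsum f T)"
  unfolding ereal_convex_iff
proof (intro allI impI)
  fix x y :: 'a and a b u :: real
  assume hx: "upper_infsum f T x \<le> ereal a" and hy: "upper_infsum f T y \<le> ereal b"
    and u: "0 \<le> u" "u \<le> 1"
  let ?z = "u *\<^sub>R x + (1-u) *\<^sub>R y"
  show "upper_infsum f T ?z \<le> ereal (u*a + (1-u)*b)"
  proof (rule ereal_le_epsilon2)
    fix e :: real assume e: "0 < e"
    have "ereal a < ereal (a + e)" using e by simp
    with hx have "upper_infsum f T x < ereal (a + e)" by (rule order.strict_trans1)
    then obtain Sx where Sxm: "Sx \<in> {S. finite S \<and> S \<subseteq> T}"
      and Sxl: "(SUP S\<in>{S. finite S \<and> Sx \<subseteq> S \<and> S \<subseteq> T}. \<Sum>t\<in>S. f t x) < ereal (a + e)"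
      unfolding upper_infsum_def by (rule INF_lessE)
    then have Sx: "finite Sx" "Sx \<subseteq> T" using Sxm by simp_all
    have "ereal b < ereal (b + e)" using e by simp
    with hy have "upper_infsum f T y < ereal (b + e)" by (rule order.strict_trans1)
    then obtain Sy where Sym: "Sy \<in> {S. finite S \<and> S \<subseteq> T}"
      and Syl: "(SUP S\<in>{S. finite S \<and> Sy \<subseteq> S \<and> S \<subseteq> T}. \<Sum>t\<in>S. f t y) < ereal (b + e)"
      unfolding upper_infsum_def by (rule INF_lessE)
    then have Sy: "finite Sy" "Sy \<subseteq> T" using Sym by simp_all
    have "upper_infsum f T ?z \<le> (SUP S\<in>{S. finite S \<and> Sx \<union> Sy \<subseteq> S \<and> S \<subseteq> T}. \<Sum>t\<in>S. f t ?z)"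
      unfolding upper_infsum_def by (rule INF_lower) (use Sx Sy in auto)
    also have "\<dots> \<le> ereal (u*(a+e) + (1-u)*(b+e))"
    proof (rule SUP_least)
      fix S assume S: "S \<in> {S. finite S \<and> Sx \<union> Sy \<subseteq> S \<and> S \<subseteq> T}"
      have 1: "(\<Sum>t\<in>S. f t x) \<le> ereal (a + e)"
        proof -
        have "(\<Sum>t\<in>S. f t x) \<le> (SUP S\<in>{S. finite S \<and> Sx \<subseteq> S \<and> S \<subseteq> T}. \<Sum>t\<in>S. f t x)"
          by (rule SUP_upper) (use S in auto)
        then show ?thesis using Sxl by (rule order.trans[OF _ less_imp_le])
      qed
      have 2: "(\<Sum>t\<in>S. f t y) \<le> ereal (b + e)"
        proof -
        have "(\<Sum>t\<in>S. f t y) \<le> (SUP S\<in>{S. finite S \<and> Sy \<subseteq> S \<and> S \<subseteq> T}. \<Sum>t\<in>S. f t y)"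
          by (rule SUP_upper) (use S in auto)
        then show ?thesis using Syl by (rule order.trans[OF _ less_imp_le])
      qed
      show "(\<Sum>t\<in>S. f t ?z) \<le> ereal (u*(a+e) + (1-u)*(b+e))"
        by (rule sum_convex_step[OF _ _ _ 1 2 u]) (use S assms in auto)
    qed
    finally have fin: "upper_infsum f T ?z \<le> ereal (u*(a+e) + (1-u)*(b+e))" .
    have "u*(a+e) + (1-u)*(b+e) = (u*a + (1-u)*b) + e" by (simp add: algebra_simps)
    then have eqe: "ereal (u*(a+e) + (1-u)*(b+e)) = ereal (u*a + (1-u)*b) + ereal e" by simp
    show "upper_infsum f T ?z \<le> ereal (u*a + (1-u)*b) + ereal e" using fin eqe by (rule order.trans[OF _ eq_refl])
  qed
qed

end
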